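(* For every simple game $v$ on $n\ge 2$ players and every player $i$ that is not a dictator in $v$, we have $\mathrm{SSI}_i(v)\le \frac{n-1}{n}$.
   Context: A simple game on $N=\{1,\dots,n\}$ is a surjective, monotone map $v\colon 2^N\to\{0,1\}$ (monotone: $v(S)\le v(T)$ whenever $S\subseteq T\subseteq N$). Player $j$ is a null player if $v(S)=v(S\cup\{j\})$ for all $S\subseteq N\setminus\{j\}$; player $i$ is a dictator if $v(\{i\})=1$ and all other players are null players. The Shapley–Shubik index is $\mathrm{SSI}_i(v)=\sum_{S\subseteq N\setminus\{i\}}\frac{|S|!\,(n-|S|-1)!}{n!}\,\big(v(S\cup\{i\})-v(S)\big)$. *)

theory Defs
  imports Complex_Main
begin

text \<open>Players are N = {1..n}; a game is a function on subsets of N (values outside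
Pow N are irrelevant).\<close>

definition simple_game :: "nat \<Rightarrow> (nat set \<Rightarrow> nat) \<Rightarrow> bool" where
  "simple_game n v \<longleftrightarrow>
     v ` Pow {1..n} = {0, 1} \<and>
     (\<forall>S T. S \<subseteq> T \<and> T \<subseteq> {1..n} \<longrightarrow> v S \<le> v T)"

definition null_player :: "nat \<Rightarrow> (nat set \<Rightarrow> nat) \<Rightarrow> nat \<Rightarrow> bool" where
  "null_player n v j \<longleftrightarrow> (\<forall>S. S \<subseteq> {1..n} - {j} \<longrightarrow> v S = v (S \<union> {j}))"

definition dictator :: "nat \<Rightarrow> (nat set \<Rightarrow> nat) \<Rightarrow> nat \<Rightarrow> bool" where
  "dictator n v i \<longleftrightarrow> v {i} = 1 \<and> (\<forall>j \<in> {1..n} - {i}. null_player n v j)"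

definition SSI :: "nat \<Rightarrow> (nat set \<Rightarrow> nat) \<Rightarrow> nat \<Rightarrow> real" where
  "SSI n v i = (\<Sum>S \<in> Pow ({1..n} - {i}).
      fact (card S) * fact (n - card S - 1) / fact n
      * (real (v (S \<union> {i})) - real (v S)))"

end

theory Submission
  imports Defs
begin

lemma weights_sum:
  assumes fin: "finite A" and cA: "card A = m" and nm: "n = Suc m"
  shows "(\<Sum>S \<in> Pow A. fact (card S) * fact (n - card S - 1) / fact n :: real) = 1"
proof -
  let ?w = "\<lambda>S. fact (card S) * fact (n - card S - 1) / fact n :: real"
  have "(\<Sum>S \<in> Pow A. ?w S) = (\<Sum>k\<in>{0..m}. \<Sum>S\<in>{S. S \<in> Pow A \<and> card S = k}. ?w S)"
    by (rule sum.group[symmetric]) (use fin cA in \<open>auto intro: card_mono\<close>)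
  also have "\<dots> = (\<Sum>k\<in>{0..m}. 1 / real n)"
  proof (rule sum.cong[OF refl])
    fix k assume k: "k \<in> {0..m}"
    have "(\<Sum>S\<in>{S. S \<in> Pow A \<and> card S = k}. ?w S)
        = (\<Sum>S\<in>{S. S \<subseteq> A \<and> card S = k}. fact k * fact (m - k) / fact n)"
      by (rule sum.cong) (auto simp: nm)
    also have "\<dots> = real (m choose k) * (fact k * fact (m - k) / fact n)"
      using n_subsets[OF fin, of k] cA by simp
    also have "\<dots> = fact m / fact n"
    proof -
      have "fact k * fact (m - k) * (m choose k) = (fact m :: nat)"
        using binomial_fact_lemma k by auto
      hence "(fact k * fact (m - k) * real (m choose k)) = fact m"
        by (metis of_nat_fact of_nat_mult)
      thus ?thesis by (simp add: field_simps)
    qed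
    also have "\<dots> = 1 / real n"
    proof -
      have "(fact n :: real) = real n * fact m" using nm by simp
      moreover have "(fact m :: real) > 0" by simp
      ultimately show ?thesis using nm by simp
    qed
    finally show "(\<Sum>S\<in>{S. S \<in> Pow A \<and> card S = k}. ?w S) = 1 / real n" .
  qed
  also have "\<dots> = 1" using nm by simp
  finally show ?thesis .
qed

theorem theorem1:
  fixes n :: nat and v :: "nat set \<Rightarrow> nat" and i :: nat
  assumes "n \<ge> 2"
    and "simple_game n v"
    and "i \<in> {1..n}"
    and "\<not> dictator n v i"
  shows "SSI n v i \<le> (real n - 1) / real n"
proof -
  define N where "N = {1..n::nat}"
  define A where "A = N - {i}"
  let ?w = "\<lambda>S. fact (card S) * fact (n - card S - 1) / fact n :: real"
  let ?d = "\<lambda>S. real (v (S \<union> {i})) - real (v S)"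
  have img: "v ` Pow N = {0,1}" and mono: "\<And>S T. S \<subseteq> T \<Longrightarrow> T \<subseteq> N \<Longrightarrow> v S \<le> v T"
    using assms(2) unfolding simple_game_def N_def by auto
  have iN: "i \<in> N" using assms(3) N_def by simp
  have finA: "finite A" unfolding A_def N_def by simp
  have cA: "card A = n - 1" using iN unfolding A_def N_def by simp
  have n1: "n = Suc (n - 1)" using assms(1) by simp
  have wsum: "(\<Sum>S \<in> Pow A. ?w S) = 1" using weights_sum[OF finA cA n1] .
  have v01: "v S \<le> 1" if "S \<subseteq> N" for S
  proof -
    have "v S \<in> {0,1}" using img that by blast
    thus ?thesis by auto
  qed
  have d01: "?d S \<in> {0,1}" if "S \<in> Pow A" for S
  proof -
    have s1: "S \<union> {i} \<subseteq> N" and s2: "S \<subseteq> N" using that iN unfolding A_def by auto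
    have "v S \<le> v (S \<union> {i})" using mono[OF _ s1] by auto
    moreover have "v (S \<union> {i}) \<le> 1" using v01[OF s1] .
    ultimately have "(v S = 0 \<and> v (S \<union> {i}) = 0) \<or> (v S = 0 \<and> v (S \<union> {i}) = 1) \<or> (v S = 1 \<and> v (S \<union> {i}) = 1)"
      by auto
    thus ?thesis by auto
  qed
  have wpos: "?w S \<ge> 0" for S by simp
  have w1n: "?w S = 1 / real n" if "S = {} \<or> S = A" for S
  proof -
    have f: "fact n = real n * fact (n - 1)" using fact_reduce[of n] assms(1) by simp
    show ?thesis using that cA assms(1) f by (auto simp: field_simps)
  qed
  obtain S0 where S0: "S0 \<in> Pow A" "?d S0 = 0" "S0 = {} \<or> S0 = A"
  proof (cases "v {i} = 0")
    case True
    have "v {} \<le> v {i}" using mono[of "{}" "{i}"] iN by auto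
    hence "?d {} = 0" using True by simp
    thus ?thesis using that[of "{}"] by auto
  next
    case False
    have vi: "v {i} = 1" using False v01[of "{i}"] iN by auto
    have "v (A \<union> {i}) = 1"
    proof -
      have "v {i} \<le> v (A \<union> {i})" using mono[of "{i}" "A \<union> {i}"] iN unfolding A_def by auto
      moreover have "v (A \<union> {i}) \<le> 1" using v01[of "A \<union> {i}"] iN unfolding A_def by auto
      ultimately show ?thesis using vi by auto
    qed
    moreover have "v A = 1"
    proof (rule ccontr)
      assume vA: "v A \<noteq> 1"
      have all0: "v S = 0" if "S \<subseteq> A" for S
      proof -
        have "v S \<le> v A" using mono[OF that] unfolding A_def by auto
        moreover have "v A = 0" using vA v01[of A] unfolding A_def by auto
        ultimately show ?thesis by simp
      qed
      have all1: "v S = 1" if "S \<subseteq> N" "i \<in> S" for S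
        using mono[of "{i}" S] that vi v01[of S] by auto
      have "dictator n v i"
        unfolding dictator_def null_player_def
      proof (intro conjI ballI allI impI)
        show "v {i} = 1" by fact
        fix j S assume j: "j \<in> {1..n} - {i}" and S: "S \<subseteq> {1..n} - {j}"
        show "v S = v (S \<union> {j})"
        proof (cases "i \<in> S")
          case True
          have "S \<subseteq> N" "S \<union> {j} \<subseteq> N" using S j unfolding N_def by auto
          thus ?thesis using all1[of S] all1[of "S \<union> {j}"] True by simp
        next
          case False
          have "S \<subseteq> A" "S \<union> {j} \<subseteq> A" using S j False unfolding A_def N_def by auto
          thus ?thesis using all0[of S] all0[of "S \<union> {j}"] by simp
        qed
      qed
      thus False using assms(4) by simp
    qed
    ultimately have "?d A = 0" by simp
    thus ?thesis using that[of A] by auto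
  qed
  have "SSI n v i = (\<Sum>S \<in> Pow A. ?w S * ?d S)"
    unfolding SSI_def A_def N_def by simp
  also have "\<dots> = ?w S0 * ?d S0 + (\<Sum>S \<in> Pow A - {S0}. ?w S * ?d S)"
    using S0(1) finA by (simp add: sum.remove)
  also have "\<dots> = (\<Sum>S \<in> Pow A - {S0}. ?w S * ?d S)" using S0(2) by simp
  also have "\<dots> \<le> (\<Sum>S \<in> Pow A - {S0}. ?w S)"
  proof (rule sum_mono)
    fix S assume "S \<in> Pow A - {S0}"
    hence "?d S \<le> 1" using d01[of S] by auto
    thus "?w S * ?d S \<le> ?w S" using wpos[of S] mult_left_le[of "?d S" "?w S"] by linarith
  qed
  also have "\<dots> = 1 - ?w S0"
    using wsum S0(1) finA by (simp add: sum.remove)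
  also have "\<dots> = (real n - 1) / real n"
    using w1n[OF S0(3)] assms(1) by (simp add: field_simps)
  finally show ?thesis .
qed

end
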